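(* Let $p$ be a prime, $M$ an $m'\times m$ matrix over $\mathbb{F}_p$, $1\le L\le p$ an integer, and $\mathbf{L}=(L_1,\dots,L_m)$ integers with $L\le L_i\le2L$. Then for every $\mathbf{b}\in\mathbb{Z}^{m'}$, $$|\{\mathbf{x}\in D_{\mathbf{L}}:M\mathbf{x}\equiv\mathbf{b}\pmod p\}|\ll_m|\{\mathbf{x}\in D_{\mathbf{L}}:M\mathbf{x}\equiv\mathbf{0}\pmod p\}|.$$
   Context: $D_{\mathbf{L}}=\prod_{i=1}^m\{x\in\mathbb{Z}:-L_i\le x\le L_i\}$. *)

theory Defs
  imports Complex_Main "HOL-Number_Theory.Cong"
begin

definition box :: "nat \<Rightarrow> (nat \<Rightarrow> int) \<Rightarrow> (nat \<Rightarrow> int) set" where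
  "box m Ls = {x. (\<forall>i<m. - Ls i \<le> x i \<and> x i \<le> Ls i) \<and> (\<forall>i\<ge>m. x i = 0)}"

text \<open>Number of x in D_L with M x = b (mod p), M an m' x m matrix with integer
  representatives of its F_p entries.\<close>
definition sol_count ::
  "int \<Rightarrow> nat \<Rightarrow> nat \<Rightarrow> (nat \<Rightarrow> nat \<Rightarrow> int) \<Rightarrow> (nat \<Rightarrow> int) \<Rightarrow> (nat \<Rightarrow> int) \<Rightarrow> nat" where
  "sol_count p m' m M Ls b =
     card {x \<in> box m Ls. \<forall>j<m'. [(\<Sum>i<m. M j i * x i) = b j] (mod p)}"

end

theory Submission
  imports Defs "HOL-Library.FuncSet"
begin

lemma box_finite: "finite (box m Ls)"
proof -
  have "box m Ls \<subseteq> (\<lambda>(f::nat\<Rightarrow>int) i. if i < m then f i else 0) ` (PiE {..<m} (\<lambda>i. {-Ls i..Ls i}))"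
  proof
    fix x assume x: "x \<in> box m Ls"
    let ?f = "restrict x {..<m}"
    have "?f \<in> PiE {..<m} (\<lambda>i. {-Ls i..Ls i})" using x by (auto simp: box_def)
    moreover have "x = (\<lambda>i. if i < m then ?f i else 0)" using x by (auto simp: box_def)
    ultimately show "x \<in> (\<lambda>(f::nat\<Rightarrow>int) i. if i < m then f i else 0) ` (PiE {..<m} (\<lambda>i. {-Ls i..Ls i}))" by blast
  qed
  moreover have "finite (PiE {..<m} (\<lambda>i. {-Ls i..Ls i}))" by (intro finite_PiE) auto
  ultimately show ?thesis by (meson finite_imageI finite_subset)
qed

lemma main_bound:
  "sol_count p m' m M Ls b \<le> 2 ^ m * sol_count p m' m M Ls (\<lambda>_. 0)"
proof -
  define S where "S c = {x \<in> box m Ls. \<forall>j<m'. [(\<Sum>i<m. M j i * x i) = c j] (mod p)}" for c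
  define cell where "cell T = {x \<in> S b. \<forall>i<m. (0 \<le> x i \<longleftrightarrow> i \<in> T)}" for T
  have fin0: "finite (S (\<lambda>_. 0))" unfolding S_def by (rule finite_subset[OF _ box_finite[of m Ls]]) blast
  have cover: "S b = (\<Union>T\<in>Pow {..<m}. cell T)"
  proof
    show "S b \<subseteq> (\<Union>T\<in>Pow {..<m}. cell T)"
    proof
      fix x assume "x \<in> S b"
      hence "x \<in> cell {i. i < m \<and> 0 \<le> x i}" unfolding cell_def by auto
      moreover have "{i. i < m \<and> 0 \<le> x i} \<in> Pow {..<m}" by auto
      ultimately show "x \<in> (\<Union>T\<in>Pow {..<m}. cell T)" by (rule UN_I[rotated])
    qed
  qed (auto simp: cell_def)
  have piece: "card (cell T) \<le> card (S (\<lambda>_. 0))" for T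
  proof (cases "cell T = {}")
    case True thus ?thesis by simp
  next
    case False
    then obtain y where y: "y \<in> cell T" by blast
    have "inj_on (\<lambda>x i. x i - y i) (cell T)"
      by (auto simp: inj_on_def fun_eq_iff)
    moreover have "(\<lambda>x i. x i - y i) ` cell T \<subseteq> S (\<lambda>_. 0)"
    proof
      fix z assume "z \<in> (\<lambda>x i. x i - y i) ` cell T"
      then obtain x where x: "x \<in> cell T" and z: "z = (\<lambda>i. x i - y i)" by blast
      have xb: "x \<in> box m Ls" and yb: "y \<in> box m Ls" using x y by (auto simp: cell_def S_def)
      have "z \<in> box m Ls"
        unfolding box_def
      proof (intro CollectI conjI allI impI)
        fix i assume i: "i < m"
        have sx: "0 \<le> x i \<longleftrightarrow> i \<in> T" and sy: "0 \<le> y i \<longleftrightarrow> i \<in> T"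
          using x y i by (auto simp: cell_def)
        have "- Ls i \<le> x i" "x i \<le> Ls i" "- Ls i \<le> y i" "y i \<le> Ls i"
          using xb yb i by (auto simp: box_def)
        thus "- Ls i \<le> z i" "z i \<le> Ls i" using sx sy z by auto
      next
        fix i assume "m \<le> i"
        thus "z i = 0" using xb yb z by (auto simp: box_def)
      qed
      moreover have "[(\<Sum>i<m. M j i * z i) = 0] (mod p)" if j: "j < m'" for j
      proof -
        have cx: "[(\<Sum>i<m. M j i * x i) = b j] (mod p)" and cy: "[(\<Sum>i<m. M j i * y i) = b j] (mod p)"
          using x y j by (auto simp: cell_def S_def)
        have "[(\<Sum>i<m. M j i * x i) - (\<Sum>i<m. M j i * y i) = b j - b j] (mod p)"
          using cx cy by (rule cong_diff)
        moreover have "(\<Sum>i<m. M j i * z i) = (\<Sum>i<m. M j i * x i) - (\<Sum>i<m. M j i * y i)"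
          by (simp add: z right_diff_distrib sum_subtractf)
        ultimately show ?thesis by simp
      qed
      ultimately show "z \<in> S (\<lambda>_. 0)" unfolding S_def by blast
    qed
    ultimately show ?thesis using fin0 by (metis card_image card_mono)
  qed
  have "card (S b) \<le> (\<Sum>T\<in>Pow {..<m}. card (cell T))"
    unfolding cover by (rule card_UN_le) simp
  also have "\<dots> \<le> (\<Sum>T\<in>Pow {..<m}. card (S (\<lambda>_. 0)))" by (rule sum_mono) (rule piece)
  also have "\<dots> = 2 ^ m * card (S (\<lambda>_. 0))" by (simp add: card_Pow)
  finally show ?thesis unfolding sol_count_def S_def .
qed

theorem lemma5p3:
  fixes m :: nat
  shows "\<exists>C :: real. C > 0 \<and>
    (\<forall>(p::int) (m'::nat) (M :: nat \<Rightarrow> nat \<Rightarrow> int) (L::int) (Ls :: nat \<Rightarrow> int) (b :: nat \<Rightarrow> int).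
       prime p \<longrightarrow> 1 \<le> L \<longrightarrow> L \<le> p \<longrightarrow> (\<forall>i<m. L \<le> Ls i \<and> Ls i \<le> 2 * L) \<longrightarrow>
       real (sol_count p m' m M Ls b) \<le> C * real (sol_count p m' m M Ls (\<lambda>_. 0)))"
proof (intro exI[of _ "2 ^ m"] conjI allI impI)
  fix p m' M Ls b
  show "real (sol_count p m' m M Ls b) \<le> 2 ^ m * real (sol_count p m' m M Ls (\<lambda>_. 0))"
    using main_bound[of p m' m M Ls b] by (metis of_nat_le_iff of_nat_mult of_nat_numeral of_nat_power)
qed simp

end
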